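(* Let $\Omega=\{(u,v)\in\mathbb R^2: 0<u<2^{1/3},\ v>0\}$ and let $I\ni t\mapsto(u(t),v(t))\in\Omega$ be the maximal solution of $$u'=\frac23\,\frac{2-u^3}{u^3v^3},\qquad v'=-\frac23\,\frac{1-2u^3}{u^4v^2},\qquad u(0)=v(0)=1.$$ Then this solution parametrizes the whole curve $v=1/\sqrt{u(2-u^3)}$, $0<u<2^{1/3}$; its existence interval is $I=(t_{min},+\infty)$ with $$t_{min}=-\frac32\int_0^1\frac{x^{3/2}}{(2-x^3)^{5/2}}\,dx,$$ and $\lim_{t\to t_{min}}u(t)=0$, $\lim_{t\to t_{min}}v(t)=+\infty$, $\lim_{t\to+\infty}u(t)=2^{1/3}$, $\lim_{t\to+\infty}v(t)=+\infty$. *)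

theory Defs
  imports "HOL-Analysis.Analysis"
begin

definition Omega :: "(real \<times> real) set" where
  "Omega = {(u, v). 0 < u \<and> u < root 3 2 \<and> 0 < v}"

definition Fu :: "real \<Rightarrow> real \<Rightarrow> real" where
  "Fu u v = (2/3) * (2 - u^3) / (u^3 * v^3)"

definition Fv :: "real \<Rightarrow> real \<Rightarrow> real" where
  "Fv u v = - (2/3) * (1 - 2 * u^3) / (u^4 * v^2)"

definition is_solution :: "real set \<Rightarrow> (real \<Rightarrow> real) \<Rightarrow> (real \<Rightarrow> real) \<Rightarrow> bool" where
  "is_solution I u v \<longleftrightarrow>
     open I \<and> is_interval I \<and> 0 \<in> I \<and> u 0 = 1 \<and> v 0 = 1 \<and>
     (\<forall>t\<in>I. (u t, v t) \<in> Omega \<and>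
        (u has_real_derivative Fu (u t) (v t)) (at t) \<and>
        (v has_real_derivative Fv (u t) (v t)) (at t))"

definition is_maximal_solution :: "real set \<Rightarrow> (real \<Rightarrow> real) \<Rightarrow> (real \<Rightarrow> real) \<Rightarrow> bool" where
  "is_maximal_solution I u v \<longleftrightarrow>
     is_solution I u v \<and>
     (\<forall>J u' v'. is_solution J u' v' \<and> I \<subseteq> J \<and> (\<forall>t\<in>I. u' t = u t \<and> v' t = v t) \<longrightarrow> J = I)"

definition t_min :: real where
  "t_min = - (3/2) * integral {0..1} (\<lambda>x::real. x powr (3/2) / (2 - x^3) powr (5/2))"

end

theory Submission
  imports Defs
begin

definition cc :: real where "cc = root 3 2"

lemma cc3: "cc^3 = 2" unfolding cc_def by (simp add: real_root_pow_pos2)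
lemma cc_pos: "cc > 0" unfolding cc_def by simp
lemma lt_cc: "0 \<le> x \<Longrightarrow> x < cc \<longleftrightarrow> x^3 < (2::real)"
proof
  assume "0 \<le> x" "x < cc" thus "x^3 < 2" using power_strict_mono[of x cc 3] cc3 by simp
next
  assume "0 \<le> x" "x^3 < 2" thus "x < cc" using cc3 cc_pos
    by (metis power_less_imp_less_base less_imp_le)
qed
lemma cc_gt1: "1 < cc" using lt_cc[of 1] by simp
lemma cc_lt2: "cc < 2"
proof -
  have "(2::real)^3 \<noteq> 2" by simp
  hence "cc \<noteq> 2" using cc3 by metis
  thus ?thesis using lt_cc[of 2] by simp
qed

definition phi :: "real \<Rightarrow> real" where
  "phi x = x * sqrt x / ((2 - x^3)^2 * sqrt (2 - x^3))"

lemma phi_eq: assumes "0 \<le> x" "x^3 < 2"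
  shows "x powr (3/2) / (2 - x^3) powr (5/2) = phi x"
proof -
  have a: "x powr (3/2) = x * sqrt x"
  proof (cases "x = 0")
    case False
    have "x powr (3/2) = x powr (1 + 1/2)" by simp
    also have "\<dots> = x powr 1 * x powr (1/2)" by (rule powr_add)
    finally have "x powr (3/2) = x powr 1 * x powr (1/2)" .
    thus ?thesis using assms by (simp add: powr_half_sqrt)
  qed simp
  have p: "2 - x^3 > 0" using assms by simp
  have "(2 - x^3) powr (5/2) = (2 - x^3) powr (2 + 1/2)" by simp
  also have "\<dots> = (2 - x^3) powr 2 * (2-x^3) powr (1/2)" by (rule powr_add)
  also have "\<dots> = (2 - x^3)^2 * sqrt (2 - x^3)" using p powr_realpow[of "2 - x^3" 2]
    by (simp add: powr_half_sqrt)
  finally show ?thesis unfolding phi_def a by simp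
qed

lemma t_min_eq: "t_min = -(3/2) * integral {0..1} phi"
  unfolding t_min_def
proof -
  have "integral {0..1} (\<lambda>x::real. x powr (3/2) / (2 - x^3) powr (5/2)) = integral {0..1} phi"
  proof (rule integral_cong)
    fix x :: real assume "x \<in> {0..1}"
    then have "0 \<le> x" "x^3 < 2" using power_le_one[of x 3] by auto
    thus "x powr (3/2) / (2 - x^3) powr (5/2) = phi x" by (rule phi_eq)
  qed
  thus "- (3 / 2) * integral {0..1} (\<lambda>x. x powr (3 / 2) / (2 - x ^ 3) powr (5 / 2)) =
    - (3 / 2) * integral {0..1} phi" by simp
qed

lemma phi_cont: assumes "b < cc" shows "continuous_on {0..b} phi"
proof -
  have "\<forall>x\<in>{0..b}. 2 - x^3 > 0"
  proof
    fix x assume "x \<in> {0..b}" then have "0 \<le> x" "x < cc" using assms by auto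
    thus "2 - x^3 > 0" using lt_cc by auto
  qed
  thus ?thesis unfolding phi_def by (intro continuous_intros) auto
qed

lemma phi_pos: "0 < x \<Longrightarrow> x < cc \<Longrightarrow> phi x > 0"
  using lt_cc[of x] unfolding phi_def by auto

definition T :: "real \<Rightarrow> real" where
  "T x = t_min + 3/2 * integral {0..x} phi"

lemma T0: "T 0 = t_min" unfolding T_def by simp
lemma T1: "T 1 = 0" unfolding T_def t_min_eq by simp

lemma T_cont: assumes "b < cc" shows "continuous_on {0..b} T"
proof -
  have "continuous_on {0..b} (\<lambda>x. integral {0..x} phi)"
    by (rule indefinite_integral_continuous_1[OF integrable_continuous_real[OF phi_cont[OF assms]]])
  from continuous_on_add[OF continuous_on_const continuous_on_mult[OF continuous_on_const this]]
  show ?thesis unfolding T_def .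
qed

lemma T_deriv: assumes "0 < x" "x < cc" shows "DERIV T x :> 3/2 * phi x"
proof -
  define b where "b = (x + cc)/2"
  have b: "b < cc" "x < b" using assms by (auto simp: b_def)
  have "((\<lambda>x. integral {0..x} phi) has_real_derivative phi x) (at x within {0..b})"
    by (rule integral_has_real_derivative[OF phi_cont[OF b(1)]]) (use assms b in simp)
  moreover have "at x within {0..b} = at x"
    by (rule at_within_interior) (use assms b in \<open>simp add: interior_atLeastAtMost_real\<close>)
  ultimately have "((\<lambda>x. integral {0..x} phi) has_real_derivative phi x) (at x)"
    by simp
  from DERIV_add[OF DERIV_const DERIV_cmult[OF this, of "3/2"]]
  show ?thesis unfolding T_def by simp
qed

lemma T_mono: assumes "0 \<le> a" "a < b" "b < cc" shows "T a < T b"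
proof (rule DERIV_pos_imp_increasing_open[OF assms(2)])
  fix x assume "a < x" "x < b"
  thus "\<exists>y. DERIV T x :> y \<and> 0 < y" using assms T_deriv phi_pos by (intro exI[of _ "3/2 * phi x"]) auto
next
  show "continuous_on {a..b} T" using T_cont[OF assms(3)] by (rule continuous_on_subset) (use assms in auto)
qed


definition hh :: "real \<Rightarrow> real" where "hh x = 1/(9*(2-x^3) * sqrt(2-x^3))"

lemma hh_alg0: fixes x s :: real assumes "s > 0"
  shows "-((9 * -(3*x^2) * s + inverse s / 2 * -(3*x^2) * (9* s^2)) * inverse((9* s^2* s)^2)) = x^2/(2*(s^2)^2* s)"
  using assms by (simp add: field_simps power2_eq_square)

lemma hh_alg: fixes x q :: real assumes "q > 0"
  shows "-((9 * -(3*x^2) * sqrt q + inverse (sqrt q) / 2 * -(3*x^2) * (9*q)) * inverse((9*q* sqrt q)^2)) = x^2/(2*q^2* sqrt q)"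
  using hh_alg0[of "sqrt q" x] assms by simp

lemma hh_deriv0: assumes p: "2 - x^3 > 0"
  shows "DERIV hh x :> x^2/(2*(2-x^3)^2 * sqrt(2-x^3))"
proof -
  have d1: "DERIV (\<lambda>x. 2 - x^3) x :> -(3*x^2)" by (auto intro!: derivative_eq_intros)
  have d2: "DERIV (\<lambda>x. sqrt(2-x^3)) x :> inverse(sqrt (2-x^3))/2 * (-(3*x^2))"
    by (rule DERIV_chain2[OF DERIV_real_sqrt[OF p] d1])
  note d3 = DERIV_mult[OF DERIV_cmult[OF d1, of 9] d2]
  have ne: "9 * (2 - x^3) * sqrt (2 - x^3) \<noteq> 0" using p by simp
  note d4 = DERIV_inverse_fun[OF d3 ne]
  have e: "hh = (\<lambda>x. inverse (9 * (2 - x^3) * sqrt (2 - x^3)))" by (auto simp: hh_def divide_inverse)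
  have s: "sqrt (2 - x^3) > 0" using p by simp
  have "DERIV (\<lambda>x. inverse (9 * (2 - x^3) * sqrt (2 - x^3))) x :> x^2/(2*(2-x^3)^2 * sqrt(2-x^3))"
    apply (rule DERIV_cong[OF d4])
    using hh_alg[OF p, of x] by (simp only: mult.assoc mult.commute mult.left_commute numeral_2_eq_2)
  thus ?thesis unfolding e .
qed

lemma hh_deriv: assumes "0 < x" "x < cc"
  shows "DERIV hh x :> x^2/(2*(2-x^3)^2 * sqrt(2-x^3))"
  using hh_deriv0 assms lt_cc by auto

lemma phi_ge: assumes "1 \<le> x" "x < cc"
  shows "x^2/(2*(2-x^3)^2 * sqrt(2-x^3)) \<le> phi x"
proof -
  have p: "2 - x^3 > 0" using assms lt_cc by auto
  have "sqrt x \<ge> 1" using assms by simp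
  moreover have "x < 2" using assms cc_lt2 by simp
  ultimately have "x/2 \<le> sqrt x" by linarith
  hence "x * (x/2) \<le> x * sqrt x" using assms by (intro mult_left_mono) auto
  hence "x^2/2 \<le> x * sqrt x" by (simp add: power2_eq_square)
  hence "(x^2/2) / ((2-x^3)^2 * sqrt(2-x^3)) \<le> x * sqrt x / ((2-x^3)^2 * sqrt(2-x^3))"
    using p by (intro divide_right_mono) auto
  thus ?thesis unfolding phi_def by (simp add: field_simps)
qed

lemma k_mono: assumes "1 \<le> b" "b < cc"
  shows "T 1 - 3/2 * hh 1 \<le> T b - 3/2 * hh b"
proof (rule DERIV_nonneg_imp_increasing_open[OF assms(1), where f = "\<lambda>x. T x - 3/2 * hh x"])
  fix x assume x: "1 < x" "x < b"
  then have "DERIV (\<lambda>x. T x - 3/2 * hh x) x :> 3/2 * phi x - 3/2 * (x^2/(2*(2-x^3)^2 * sqrt(2-x^3)))"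
  proof -
    have "0 < x" "x < cc" using x assms by auto
    from DERIV_diff[OF T_deriv[OF this] DERIV_cmult[OF hh_deriv[OF this], of "3/2"]]
    show ?thesis .
  qed
  moreover have "3/2 * phi x - 3/2 * (x^2/(2*(2-x^3)^2 * sqrt(2-x^3))) \<ge> 0"
    using phi_ge[of x] x assms by (simp only: diff_ge_0_iff_ge mult_le_cancel_left_pos)
  ultimately show "\<exists>y. DERIV (\<lambda>x. T x - 3/2 * hh x) x :> y \<and> 0 \<le> y" by blast
next
  have "\<forall>x\<in>{1..b}. 2 - x^3 > 0"
  proof
    fix x assume "x \<in> {1..b}" then have "0 \<le> x" "x < cc" using assms by auto
    thus "2 - x^3 > 0" using lt_cc by auto
  qed
  hence "continuous_on {1..b} hh" unfolding hh_def by (intro continuous_intros) auto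
  moreover have "continuous_on {1..b} T" using T_cont[OF assms(2)] by (rule continuous_on_subset) auto
  ultimately show "continuous_on {1..b} (\<lambda>x. T x - 3/2 * hh x)" by (intro continuous_intros)
qed

lemma hh_big: "\<exists>b. 1 \<le> b \<and> b < cc \<and> hh b > M"
proof -
  define y where "y = 1 / (9 * max M 1 + 9)"
  have y: "0 < y" "y < 1" unfolding y_def by (auto simp: field_simps)
  define b where "b = root 3 (2 - y)"
  have b3: "b^3 = 2 - y" unfolding b_def using y by (simp add: real_root_pow_pos2)
  have b1: "1 \<le> b" unfolding b_def using y by simp
  have bc: "b < cc" using lt_cc[of b] b1 b3 y by simp
  have "sqrt y \<le> 1" using y by simp
  hence "9 * y * sqrt y \<le> 9 * y" using y by (simp add: mult_left_le)
  moreover have "9 * y * sqrt y > 0" using y by simp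
  ultimately have "1 / (9 * y) \<le> 1 / (9 * y * sqrt y)" by (intro divide_left_mono) auto
  moreover have "1 / (9*y) = max M 1 + 1" unfolding y_def by (auto simp: field_simps)
  ultimately have "hh b \<ge> max M 1 + 1" unfolding hh_def using b3 by simp
  thus ?thesis using b1 bc by (intro exI[of _ b]) auto
qed

lemma T_big: "\<exists>b. 1 \<le> b \<and> b < cc \<and> T b > M"
proof -
  obtain b where b: "1 \<le> b" "b < cc" "hh b > 2/3 * (M - (T 1 - 3/2 * hh 1))"
    using hh_big by blast
  thus ?thesis using k_mono[OF b(1,2)] by (intro exI[of _ b]) auto
qed


lemma T_gt: "0 < x \<Longrightarrow> x < cc \<Longrightarrow> T x > t_min"
  using T_mono[of 0 x] T0 by auto

lemma T_inj: "0 < x \<Longrightarrow> x < cc \<Longrightarrow> 0 < y \<Longrightarrow> y < cc \<Longrightarrow> T x = T y \<Longrightarrow> x = y"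
  using T_mono[of x y] T_mono[of y x] by (cases x y rule: linorder_cases) auto

lemma T_surj: assumes "t > t_min" shows "\<exists>x. 0 < x \<and> x < cc \<and> T x = t"
proof -
  obtain b where b: "1 \<le> b" "b < cc" "T b > t" using T_big by blast
  have "\<exists>x. 0 \<le> x \<and> x \<le> b \<and> T x = t"
    by (rule IVT') (use assms b T0 T_cont[OF b(2)] in auto)
  then obtain x where x: "0 \<le> x" "x \<le> b" "T x = t" by blast
  have "x \<noteq> 0" using x T0 assms by auto
  thus ?thesis using x b by (intro exI[of _ x]) auto
qed

definition U :: "real \<Rightarrow> real" where "U t = (THE x. 0 < x \<and> x < cc \<and> T x = t)"

lemma U: assumes "t > t_min" shows "0 < U t" "U t < cc" "T (U t) = t"
proof -
  have "\<exists>!x. 0 < x \<and> x < cc \<and> T x = t" using T_surj[OF assms] T_inj by blast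
  from theI'[OF this] show "0 < U t" "U t < cc" "T (U t) = t" unfolding U_def by auto
qed

lemma U_T: assumes "0 < x" "x < cc" shows "U (T x) = x"
  using U[OF T_gt[OF assms]] T_inj assms by blast

lemma U_deriv: assumes "t > t_min" shows "DERIV U t :> (2/3) / phi (U t)"
proof -
  have u: "0 < U t" "U t < cc" "T (U t) = t" using U[OF assms] by auto
  have cont: "isCont U t"
  proof -
    define d where "d = min (U t) (cc - U t) / 2"
    have d: "0 < d" using u by (auto simp: d_def)
    have e: "2 * d = min (U t) (cc - U t)" unfolding d_def by simp
    have dd: "2 * d \<le> U t" "2 * d \<le> cc - U t" unfolding e by (rule min.cobounded1, rule min.cobounded2)
    have zz: "0 < z \<and> z < cc" if "\<bar>z - U t\<bar> \<le> d" for z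
    proof -
      have "z - U t \<le> d" "U t - z \<le> d" using that by (simp_all add: abs_le_iff)
      thus ?thesis using dd d u(1,2) by linarith
    qed
    have "isCont U (T (U t))"
    proof (rule isCont_inverse_function[OF d, where f=T and g=U and x="U t"])
      fix z assume "\<bar>z - U t\<bar> \<le> d"
      then show "U (T z) = z" using U_T zz by blast
    next
      fix z assume "\<bar>z - U t\<bar> \<le> d"
      then show "isCont T z" using T_deriv zz DERIV_isCont by blast
    qed
    thus ?thesis using u by simp
  qed
  have "DERIV U t :> inverse (3/2 * phi (U t))"
  proof (rule DERIV_inverse_function[where f = T and a = t_min and b = "t + 1"])
    show "DERIV T (U t) :> 3/2 * phi (U t)" using T_deriv u by auto
    show "3/2 * phi (U t) \<noteq> 0" using phi_pos[OF u(1,2)] by simp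
    show "t_min < t" "t < t + 1" using assms by auto
    show "\<And>y. t_min < y \<Longrightarrow> y < t + 1 \<Longrightarrow> T (U y) = y" using U by auto
    show "isCont U t" by (rule cont)
  qed
  moreover have "inverse (3/2 * phi (U t)) = (2/3) / phi (U t)" by (simp add: field_simps)
  ultimately show ?thesis by simp
qed

lemma alg1: fixes s r :: real assumes "s > 0" "r > 0"
  shows "(2/3) / (s^2 * s / ((r^2)^2 * r)) = (2/3) * r^2 / ((s^2)^3 * (1/(s*r))^3)"
  using assms apply (simp add: field_simps) apply algebra done
lemma Fu_phi: assumes "0 < u" "u < cc"
  shows "Fu u (1 / sqrt (u * (2 - u^3))) = (2/3) / phi u"
proof -
  have q: "2 - u^3 > 0" using assms lt_cc by auto
  define s where "s = sqrt u"
  define r where "r = sqrt (2 - u^3)"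
  have s: "s > 0" "s^2 = u" using assms by (auto simp: s_def)
  have r: "r > 0" "r^2 = 2 - u^3" using q by (auto simp: r_def)
  have "phi u = u * s / ((2 - u^3)^2 * r)" by (simp add: phi_def s_def r_def)
  also have "\<dots> = s^2 * s / ((r^2)^2 * r)" by (simp only: s(2) r(2))
  finally have 1: "phi u = s^2 * s / ((r^2)^2 * r)" .
  have "Fu u (1 / sqrt (u * (2 - u^3))) = (2/3) * (2 - u^3) / (u^3 * (1/(s*r))^3)"
    unfolding Fu_def by (simp add: real_sqrt_mult s_def r_def)
  also have "\<dots> = (2/3) * r^2 / ((s^2)^3 * (1/(s*r))^3)" by (simp only: s(2) r(2))
  finally have 2: "Fu u (1 / sqrt (u * (2 - u^3))) = (2/3) * r^2 / ((s^2)^3 * (1/(s*r))^3)" .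
  show ?thesis using 1 2 alg1[OF s(1) r(1)] by simp
qed


definition V :: "real \<Rightarrow> real" where "V t = 1 / sqrt (U t * (2 - U t ^ 3))"

lemma tmin_neg: "t_min < 0" using T_gt[of 1] T1 cc_gt1 by simp

lemma U0: "U 0 = 1" using U_T[of 1] T1 cc_gt1 by simp
lemma V0: "V 0 = 1" by (simp add: V_def U0)

lemma alg2q: fixes u s r q :: real assumes "u \<noteq> 0" "q \<noteq> 0" "s > 0" "r > 0" "q = 2 - u^3"
  shows "- ((2/3) * q / (u^3 * (1/(s*r))^3) * q + u * (-(3 * u^2 * ((2/3) * q / (u^3 * (1/(s*r))^3)))))
     / (2 * (u*q) * (s*r)) = - (2/3) * (1 - 2 * u^3) / (u^4 * (1/(s*r))^2)"
proof -
  have "- ((2/3) * q / (u^3 * (1/(s*r))^3) * q + u * (-(3 * u^2 * ((2/3) * q / (u^3 * (1/(s*r))^3)))))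
     / (2 * (u*q) * (s*r)) = - (1/3) * (q - 3*u^3) * (s*r)^2 / u^4"
    using assms(1-4) by (simp add: field_simps) algebra
  also have "\<dots> = - (2/3) * (1 - 2 * u^3) / (u^4 * (1/(s*r))^2)"
    using assms by (simp add: field_simps) algebra
  finally show ?thesis .
qed
lemma alg2: fixes u s r :: real assumes "u \<noteq> 0" "2 - u^3 \<noteq> 0" "s > 0" "r > 0"
  shows "- ((2/3) * (2 - u^3) / (u^3 * (1/(s*r))^3) * (2 - u^3) + u * (-(3 * u^2 * ((2/3) * (2 - u^3) / (u^3 * (1/(s*r))^3)))))
     / (2 * (u*(2 - u^3)) * (s*r)) = - (2/3) * (1 - 2 * u^3) / (u^4 * (1/(s*r))^2)"
  using alg2q[OF assms refl] .

lemma inv_sqrt_deriv: assumes "DERIV w t :> w'" "w t > 0"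
  shows "DERIV (\<lambda>t. 1 / sqrt (w t)) t :> - w' / (2 * w t * sqrt (w t))"
  using assms by (auto intro!: derivative_eq_intros simp: field_simps)


lemma U_deriv2: assumes "t > t_min" shows "DERIV U t :> Fu (U t) (V t)"
  using U_deriv[OF assms] Fu_phi[OF U(1,2)[OF assms]] unfolding V_def by simp

lemma V_deriv: assumes "t > t_min" shows "DERIV V t :> Fv (U t) (V t)"
proof -
  define u where "u = U t"
  have u: "0 < u" "u < cc" using U[OF assms] by (auto simp: u_def)
  have q: "2 - u^3 > 0" using u lt_cc by auto
  define F where "F = Fu u (V t)"
  have du: "DERIV U t :> F" using U_deriv2[OF assms] by (simp add: F_def u_def)
  note d3 = DERIV_power[OF du, of 3]
  note dw0 = DERIV_mult[OF du DERIV_diff[OF DERIV_const d3]]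
  have dw: "DERIV (\<lambda>t. U t * (2 - U t ^ 3)) t :> F * (2 - u^3) + u * (-(3 * u^2 * F))"
    by (rule DERIV_cong[OF dw0]) (simp add: u_def algebra_simps)
  have wpos: "U t * (2 - U t ^ 3) > 0" using u q by (simp add: u_def)
  note dV = inv_sqrt_deriv[OF dw wpos]
  define s where "s = sqrt u"
  define r where "r = sqrt (2 - u^3)"
  have s: "s > 0" using u by (simp add: s_def)
  have r: "r > 0" using q by (simp add: r_def)
  have sw: "sqrt (u * (2 - u^3)) = s * r" by (simp add: s_def r_def real_sqrt_mult)
  have Vt: "V t = 1 / (s * r)" unfolding V_def u_def[symmetric] sw ..
  have Fe: "F = (2/3) * (2 - u^3) / (u^3 * (1/(s*r))^3)" unfolding F_def Fu_def Vt ..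
  have "- (F * (2 - u^3) + u * (-(3 * u^2 * F))) / (2 * (U t * (2 - U t ^ 3)) * sqrt (U t * (2 - U t ^ 3)))
     = Fv (U t) (V t)"
    unfolding u_def[symmetric] sw Vt Fv_def Fe
    using alg2[of u s r] u q s r by simp
  thus ?thesis using dV unfolding V_def by simp
qed


lemma V_pos: "t > t_min \<Longrightarrow> V t > 0"
  using U[of t] lt_cc[of "U t"] unfolding V_def by auto

lemma sol: "is_solution {t_min<..} U V"
  unfolding is_solution_def
proof (intro conjI ballI)
  show "open {t_min<..}" by simp
  show "is_interval {t_min<..}" by simp
  show "0 \<in> {t_min<..}" using tmin_neg by simp
  show "U 0 = 1" by (rule U0)
  show "V 0 = 1" by (rule V0)
  fix t assume "t \<in> {t_min<..}"
  then have t: "t > t_min" by simp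
  show "(U t, V t) \<in> Omega" using U[OF t] V_pos[OF t] unfolding Omega_def cc_def by auto
  show "DERIV U t :> Fu (U t) (V t)" by (rule U_deriv2[OF t])
  show "DERIV V t :> Fv (U t) (V t)" by (rule V_deriv[OF t])
qed

lemma Hderiv: assumes du: "DERIV u t :> Fu (u t) (v t)" and dv: "DERIV v t :> Fv (u t) (v t)"
  and pos: "u t > 0" "v t > 0"
  shows "DERIV (\<lambda>t. v t ^ 2 * (u t * (2 - u t ^ 3))) t :> 0"
proof -
  note d1 = DERIV_power[OF dv, of 2]
  note d3 = DERIV_power[OF du, of 3]
  note dw = DERIV_mult[OF du DERIV_diff[OF DERIV_const d3]]
  note dH = DERIV_mult[OF d1 dw]
  show ?thesis
    by (rule DERIV_cong[OF dH]) (use pos in \<open>simp add: Fu_def Fv_def field_simps, algebra\<close>)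
qed


lemma uniq: assumes "is_solution J u v"
  shows "J \<subseteq> {t_min<..} \<and> (\<forall>t\<in>J. u t = U t \<and> v t = V t)"
proof -
  have J: "is_interval J" "0 \<in> J" "u 0 = 1" "v 0 = 1"
    and S: "\<And>t. t \<in> J \<Longrightarrow> (u t, v t) \<in> Omega \<and> DERIV u t :> Fu (u t) (v t) \<and> DERIV v t :> Fv (u t) (v t)"
    using assms unfolding is_solution_def by auto
  have cJ: "convex J" using J(1) is_interval_convex_1 by blast
  have P: "0 < u t" "u t < cc" "0 < v t" if "t \<in> J" for t
    using S[OF that] unfolding Omega_def cc_def by auto
  have du: "DERIV u t :> Fu (u t) (v t)" if "t \<in> J" for t using S[OF that] by blast
  have dv: "DERIV v t :> Fv (u t) (v t)" if "t \<in> J" for t using S[OF that] by blast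
  obtain C where C: "\<forall>t\<in>J. v t ^ 2 * (u t * (2 - u t ^ 3)) = C"
    using has_field_derivative_zero_constant[OF cJ, of "\<lambda>t. v t ^ 2 * (u t * (2 - u t ^ 3))"]
      Hderiv[OF du dv P(1) P(3)] has_field_derivative_at_within by blast
  have C1: "C = 1" using C J(2-4) by force
  have vV: "v t = 1 / sqrt (u t * (2 - u t ^ 3))" if t: "t \<in> J" for t
  proof -
    have w: "u t * (2 - u t ^ 3) > 0" using P[OF t] lt_cc[of "u t"] by auto
    have "v t ^ 2 * (u t * (2 - u t ^ 3)) = 1" using C C1 t by auto
    hence "u t * (2 - u t ^ 3) = (1 / v t)^2" using P[OF t] by (simp add: field_simps)
    hence "sqrt (u t * (2 - u t ^ 3)) = 1 / v t" using P[OF t] by simp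
    thus ?thesis using P[OF t] by simp
  qed
  have dG: "DERIV (\<lambda>t. T (u t) - t) t :> 0" if t: "t \<in> J" for t
  proof -
    note d = DERIV_diff[OF DERIV_chain2[OF T_deriv[OF P(1,2)[OF t]] du[OF t]] DERIV_ident]
    have "3/2 * phi (u t) * Fu (u t) (v t) = 1"
      using Fu_phi[OF P(1,2)[OF t]] vV[OF t] phi_pos[OF P(1,2)[OF t]] by simp
    with d show ?thesis by simp
  qed
  obtain G where G: "\<forall>t\<in>J. T (u t) - t = G"
    using has_field_derivative_zero_constant[OF cJ, of "\<lambda>t. T (u t) - t"] dG has_field_derivative_at_within by blast
  have G0: "G = 0" using G J(2,3) T1 by force
  have Tu: "T (u t) = t" if "t \<in> J" for t using G G0 that by auto
  show ?thesis
  proof (intro conjI ballI subsetI)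
    fix t assume t: "t \<in> J"
    show "t \<in> {t_min<..}" using T_gt[OF P(1,2)[OF t]] Tu[OF t] by simp
    show "u t = U t" using U_T[OF P(1,2)[OF t]] Tu[OF t] by simp
    then show "v t = V t" using vV[OF t] unfolding V_def by simp
  qed
qed


lemma maxsol: "is_maximal_solution {t_min<..} U V"
  unfolding is_maximal_solution_def using sol uniq by blast

lemma U_mono: assumes "t_min < s" "s < t" shows "U s < U t"
proof (rule ccontr)
  assume "\<not> U s < U t"
  hence "U t \<le> U s" by simp
  moreover have "0 < U t" "U s < cc" using U assms by auto
  ultimately have "T (U t) \<le> T (U s)" using T_mono[of "U t" "U s"] by (cases "U t = U s") auto
  thus False using U assms by auto
qed

lemma lim_U_top: "(U \<longlongrightarrow> cc) at_top"
proof (rule order_tendstoI)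
  fix a assume a: "a < cc"
  show "eventually (\<lambda>t. a < U t) at_top"
  proof (cases "a \<le> 0")
    case True
    have "eventually (\<lambda>t. t_min < t) at_top" by simp
    thus ?thesis by eventually_elim (use True U in force)
  next
    case False
    have "eventually (\<lambda>t. max t_min (T a) < t) at_top" by (rule eventually_gt_at_top)
    thus ?thesis
    proof eventually_elim
      case (elim t)
      then have "U (T a) < U t" using U_mono[of "T a" t] T_gt[of a] a False by auto
      thus ?case using U_T[of a] a False by auto
    qed
  qed
next
  fix a assume a: "cc < a"
  have "eventually (\<lambda>t. t_min < t) at_top" by simp
  thus "eventually (\<lambda>t. U t < a) at_top" by eventually_elim (use a U in force)
qed

lemma lim_U_tmin: "(U \<longlongrightarrow> 0) (at_right t_min)"
proof (rule order_tendstoI)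
  fix a :: real assume a: "a < 0"
  have "eventually (\<lambda>t. t_min < t) (at_right t_min)" by (rule eventually_at_right_less)
  thus "eventually (\<lambda>t. a < U t) (at_right t_min)" by eventually_elim (use a U in force)
next
  fix a :: real assume a: "0 < a"
  define a' where "a' = min a (cc/2)"
  have a': "0 < a'" "a' < cc" "a' \<le> a" using a cc_pos by (auto simp: a'_def)
  have "T a' > t_min" using T_gt a' by auto
  moreover have "\<forall>y>t_min. y < T a' \<longrightarrow> U y < a"
  proof (intro allI impI)
    fix y assume "t_min < y" "y < T a'"
    hence "U y < U (T a')" by (rule U_mono)
    thus "U y < a" using U_T[OF a'(1,2)] a' by simp
  qed
  ultimately show "eventually (\<lambda>t. U t < a) (at_right t_min)"
    unfolding eventually_at_right_field by blast
qed

lemma V_lim: assumes lim: "((\<lambda>t. U t * (2 - U t ^ 3)) \<longlongrightarrow> 0) F"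
  and ev: "eventually (\<lambda>t. t_min < t) F"
  shows "filterlim V at_top F"
proof -
  have "eventually (\<lambda>t. U t * (2 - U t ^ 3) > 0) F"
    using ev by eventually_elim (use U lt_cc in force)
  hence "filterlim (\<lambda>t. U t * (2 - U t ^ 3)) (at_right 0) F"
    by (rule tendsto_imp_filterlim_at_right[OF lim])
  from filterlim_compose[OF filterlim_inverse_at_top_right this]
  have "filterlim (\<lambda>t. inverse (U t * (2 - U t ^ 3))) at_top F" .
  from filterlim_compose[OF sqrt_at_top this]
  have "filterlim (\<lambda>t. sqrt (inverse (U t * (2 - U t ^ 3)))) at_top F" .
  moreover have "(\<lambda>t. sqrt (inverse (U t * (2 - U t ^ 3)))) = V"
    by (rule ext) (simp only: V_def inverse_eq_divide real_sqrt_divide real_sqrt_one)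
  ultimately show ?thesis by simp
qed

lemma V_top: "filterlim V at_top at_top"
proof (rule V_lim)
  have "((\<lambda>t. U t * (2 - U t ^ 3)) \<longlongrightarrow> cc * (2 - cc ^ 3)) at_top"
    by (intro tendsto_intros lim_U_top)
  thus "((\<lambda>t. U t * (2 - U t ^ 3)) \<longlongrightarrow> 0) at_top" using cc3 by simp
  show "eventually (\<lambda>t. t_min < t) at_top" by simp
qed

lemma V_tmin: "filterlim V at_top (at_right t_min)"
proof (rule V_lim)
  have "((\<lambda>t. U t * (2 - U t ^ 3)) \<longlongrightarrow> 0 * (2 - 0 ^ 3)) (at_right t_min)"
    by (intro tendsto_intros lim_U_tmin)
  thus "((\<lambda>t. U t * (2 - U t ^ 3)) \<longlongrightarrow> 0) (at_right t_min)" by simp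
  show "eventually (\<lambda>t. t_min < t) (at_right t_min)" by (rule eventually_at_right_less)
qed


theorem corollary4p6:
  shows "(\<exists>I u v. is_maximal_solution I u v) \<and>
    (\<forall>I u v. is_maximal_solution I u v \<longrightarrow>
       (\<lambda>t. (u t, v t)) ` I = {(x, 1 / sqrt (x * (2 - x^3))) | x. 0 < x \<and> x < root 3 2} \<and>
       I = {t_min<..} \<and>
       (u \<longlongrightarrow> 0) (at_right t_min) \<and>
       filterlim v at_top (at_right t_min) \<and>
       (u \<longlongrightarrow> root 3 2) at_top \<and>
       filterlim v at_top at_top)"
proof (intro conjI allI impI)
  show "\<exists>I u v. is_maximal_solution I u v" using maxsol by blast
  fix I u v assume m: "is_maximal_solution I u v"
  have s: "is_solution I u v" using m unfolding is_maximal_solution_def by blast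
  have un: "I \<subseteq> {t_min<..}" "\<forall>t\<in>I. u t = U t \<and> v t = V t" using uniq[OF s] by auto
  have "{t_min<..} = I"
    using m sol un unfolding is_maximal_solution_def by metis
  then show II: "I = {t_min<..}" by simp
  have uU: "\<And>t. t_min < t \<Longrightarrow> u t = U t" and vV: "\<And>t. t_min < t \<Longrightarrow> v t = V t"
    using un II by auto
  have "(\<lambda>t. (u t, v t)) ` I = (\<lambda>t. (U t, V t)) ` {t_min<..}"
    unfolding II by (rule image_cong) (auto simp: uU vV)
  also have "\<dots> = {(x, 1 / sqrt (x * (2 - x^3))) | x. 0 < x \<and> x < root 3 2}"
  proof (intro equalityI subsetI)
    fix p assume "p \<in> (\<lambda>t. (U t, V t)) ` {t_min<..}"
    then obtain t where t: "t_min < t" "p = (U t, V t)" by auto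
    thus "p \<in> {(x, 1 / sqrt (x * (2 - x^3))) | x. 0 < x \<and> x < root 3 2}"
      using U[OF t(1)] unfolding V_def cc_def by auto
  next
    fix p assume "p \<in> {(x, 1 / sqrt (x * (2 - x^3))) | x. 0 < x \<and> x < root 3 2}"
    then obtain x where x: "0 < x" "x < cc" "p = (x, 1 / sqrt (x * (2 - x^3)))"
      unfolding cc_def by auto
    have "t_min < T x" "U (T x) = x" using T_gt[OF x(1,2)] U_T[OF x(1,2)] by auto
    moreover have "p = (U (T x), V (T x))" using x(3) \<open>U (T x) = x\<close> unfolding V_def by simp
    ultimately show "p \<in> (\<lambda>t. (U t, V t)) ` {t_min<..}" by blast
  qed
  finally show "(\<lambda>t. (u t, v t)) ` I = {(x, 1 / sqrt (x * (2 - x^3))) | x. 0 < x \<and> x < root 3 2}" .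
  have e1: "eventually (\<lambda>t. u t = U t) (at_right t_min)"
    using eventually_at_right_less[of t_min] by eventually_elim (rule uU)
  have e2: "eventually (\<lambda>t. v t = V t) (at_right t_min)"
    using eventually_at_right_less[of t_min] by eventually_elim (rule vV)
  have e3: "eventually (\<lambda>t. u t = U t) at_top"
    using eventually_gt_at_top[of t_min] by eventually_elim (rule uU)
  have e4: "eventually (\<lambda>t. v t = V t) at_top"
    using eventually_gt_at_top[of t_min] by eventually_elim (rule vV)
  show "(u \<longlongrightarrow> 0) (at_right t_min)" using tendsto_cong[OF e1] lim_U_tmin by simp
  show "filterlim v at_top (at_right t_min)" using filterlim_cong[OF refl refl e2] V_tmin by simp
  show "(u \<longlongrightarrow> root 3 2) at_top" using tendsto_cong[OF e3] lim_U_top unfolding cc_def by simp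
  show "filterlim v at_top at_top" using filterlim_cong[OF refl refl e4] V_top by simp
qed

end
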